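(* Let $m$ denote normalized Lebesgue (Haar) measure on $\mathbb T$. Then \[\bigcap_{n=1}^\infty\overline{\mathrm{conv}\{\widehat R_k(\mu):k\ge n,\ \mu\in\mathcal M(\mathbb T)\}}=\{m\},\] where the closure is taken in the total-variation norm.
   Context: $\mathcal M(\mathbb T)$ is the set of Borel probability measures on $\mathbb T$, viewed as states on $C(\mathbb T)$ via integration. For $\theta\in\mathbb R$, $\rho_\theta$ is the Markov operator $\rho_\theta(f)(z)=f(e^{i\theta}z)$ on $C(\mathbb T)$; for $k\in\mathbb N$, $R_k=\frac1k\sum_{j=0}^{k-1}\rho_{2\pi j/k}$, and $\widehat R_k:\mathcal M(\mathbb T)\to\mathcal M(\mathbb T)$ is given by $\widehat R_k(\mu)(f)=\mu(R_k(f))$. The total-variation norm is $\|\mu-\nu\|=|\mu-\nu|(\mathbb T)$, equal to the norm of $\mu-\nu$ as a functional on $C(\mathbb T)$. *)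

theory Defs
  imports "HOL-Probability.Probability"
begin

definition circle :: "complex set" where
  "circle = sphere 0 1"

definition circ_borel :: "complex measure" where
  "circ_borel = restrict_space borel circle"

definition circ_prob :: "complex measure \<Rightarrow> bool" where
  "circ_prob \<mu> \<longleftrightarrow> prob_space \<mu> \<and> sets \<mu> = sets circ_borel"

definition rot :: "nat \<Rightarrow> nat \<Rightarrow> complex \<Rightarrow> complex" where
  "rot k j z = cis (2 * pi * real j / real k) * z"

text \<open>The dual map hat R_k: hat R_k(mu)(f) = mu(R_k f) = (1/k) sum_j int f(e^{2 pi i j/k} z) dmu,
  i.e. hat R_k(mu) = (1/k) sum_j (push-forward of mu under rotation by 2 pi j / k).\<close>
definition Rhat :: "nat \<Rightarrow> complex measure \<Rightarrow> complex measure" where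
  "Rhat k \<mu> = measure_of circle (sets circ_borel)
     (\<lambda>A. (\<Sum>j<k. emeasure (distr \<mu> circ_borel (rot k j)) A) / of_nat k)"

definition conv_meas :: "complex measure set \<Rightarrow> complex measure set" where
  "conv_meas S = {\<nu>. circ_prob \<nu> \<and>
     (\<exists>(I::nat set) c g. finite I \<and> (\<forall>i\<in>I. c i \<ge> (0::real) \<and> g i \<in> S) \<and> (\<Sum>i\<in>I. c i) = 1 \<and>
        (\<forall>A\<in>sets circ_borel. measure \<nu> A = (\<Sum>i\<in>I. c i * measure (g i) A)))}"

definition tv_dist :: "complex measure \<Rightarrow> complex measure \<Rightarrow> real" where
  "tv_dist \<mu> \<nu> = (SUP P \<in> {P. finite P \<and> disjoint P \<and> P \<subseteq> sets circ_borel}.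
                     (\<Sum>A\<in>P. \<bar>measure \<mu> A - measure \<nu> A\<bar>))"

definition tv_closure :: "complex measure set \<Rightarrow> complex measure set" where
  "tv_closure S = {\<nu>. circ_prob \<nu> \<and> (\<forall>\<epsilon>>0. \<exists>\<rho>\<in>S. tv_dist \<nu> \<rho> < \<epsilon>)}"

definition haar_circle :: "complex measure" where
  "haar_circle = distr (uniform_measure lborel {0..<2*pi}) circ_borel cis"

end

theory Submission
  imports Defs
begin

lemma space_cb[simp]: "space circ_borel = circle"
  by (simp add: circ_borel_def space_restrict_space circle_def)

lemma sigma_cb: "sigma_algebra circle (sets circ_borel)"
  using sets.sigma_algebra_axioms[of circ_borel] by simp

lemma rot_meas[measurable]: "rot k j \<in> circ_borel \<rightarrow>\<^sub>M circ_borel"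
proof -
  have "rot k j \<in> borel_measurable borel" unfolding rot_def by measurable
  hence "rot k j \<in> restrict_space borel circle \<rightarrow>\<^sub>M borel"
    using measurable_restrict_space1 by blast
  moreover have "rot k j z \<in> circle" if "z \<in> circle" for z
    using that by (simp add: rot_def circle_def norm_mult)
  ultimately show ?thesis unfolding circ_borel_def
    by (intro measurable_restrict_space2) (auto simp: space_restrict_space)
qed

lemma Rhat_emeasure:
  assumes mu: "circ_prob \<mu>" and A: "A \<in> sets circ_borel"
  shows "emeasure (Rhat k \<mu>) A = (\<Sum>j<k. emeasure \<mu> (rot k j -` A \<inter> circle)) / of_nat k"
proof -
  have smu: "sets \<mu> = sets circ_borel" using mu circ_prob_def by auto
  have spmu: "space \<mu> = circle" using sets_eq_imp_space_eq[OF smu] by simp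
  have md: "measurable \<mu> circ_borel = measurable circ_borel circ_borel"
    using smu by (rule measurable_cong_sets) auto
  have e: "emeasure (distr \<mu> circ_borel (rot k j)) B = emeasure \<mu> (rot k j -` B \<inter> circle)"
    if "B \<in> sets circ_borel" for j B
    using that md spmu by (subst emeasure_distr) auto
  have "emeasure (Rhat k \<mu>) A = (\<Sum>j<k. emeasure (distr \<mu> circ_borel (rot k j)) A) / of_nat k"
    unfolding Rhat_def
  proof (rule emeasure_measure_of_sigma[OF sigma_cb _ _ A])
    show "positive (sets circ_borel) (\<lambda>A. (\<Sum>j<k. emeasure (distr \<mu> circ_borel (rot k j)) A) / of_nat k)"
      by (simp add: positive_def)
    show "countably_additive (sets circ_borel) (\<lambda>A. (\<Sum>j<k. emeasure (distr \<mu> circ_borel (rot k j)) A) / of_nat k)"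
      unfolding countably_additive_def
    proof (intro allI impI)
      fix F :: "nat \<Rightarrow> complex set"
      assume F: "range F \<subseteq> sets circ_borel" "disjoint_family F" "\<Union> (range F) \<in> sets circ_borel"
      have "(\<Sum>i. (\<Sum>j<k. emeasure (distr \<mu> circ_borel (rot k j)) (F i)) / of_nat k)
          = (\<Sum>i. (\<Sum>j<k. emeasure (distr \<mu> circ_borel (rot k j)) (F i))) / of_nat k"
        by (simp add: divide_ennreal_def ennreal_suminf_multc)
      also have "(\<Sum>i. (\<Sum>j<k. emeasure (distr \<mu> circ_borel (rot k j)) (F i)))
          = (\<Sum>j<k. (\<Sum>i. emeasure (distr \<mu> circ_borel (rot k j)) (F i)))"
        by (rule suminf_sum) simp
      also have "\<dots> = (\<Sum>j<k. emeasure (distr \<mu> circ_borel (rot k j)) (\<Union> (range F)))"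
        using F by (intro sum.cong refl suminf_emeasure) auto
      finally show "(\<Sum>i. (\<Sum>j<k. emeasure (distr \<mu> circ_borel (rot k j)) (F i)) / of_nat k)
          = (\<Sum>j<k. emeasure (distr \<mu> circ_borel (rot k j)) (\<Union> (range F))) / of_nat k" .
    qed
  qed
  also have "\<dots> = (\<Sum>j<k. emeasure \<mu> (rot k j -` A \<inter> circle)) / of_nat k"
    using e[OF A] by simp
  finally show ?thesis .
qed



lemma cis_meas[measurable]: "cis \<in> borel \<rightarrow>\<^sub>M circ_borel"
proof -
  have "cis \<in> borel_measurable borel"
    by (intro borel_measurable_continuous_onI continuous_intros)
  thus ?thesis unfolding circ_borel_def
    by (intro measurable_restrict_space2) (auto simp: circle_def)
qed

lemma haar_emeasure:
  assumes A: "A \<in> sets circ_borel"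
  shows "emeasure haar_circle A = emeasure lborel (cis -` A \<inter> {0..<2*pi}) / ennreal (2*pi)"
proof -
  have "cis -` A \<in> sets borel" using measurable_sets[OF cis_meas A] by simp
  thus ?thesis unfolding haar_circle_def using A
    by (subst emeasure_distr) (auto simp: Int_commute)
qed

lemma haar_prob: "circ_prob haar_circle"
  unfolding circ_prob_def
proof
  show "sets haar_circle = sets circ_borel" by (simp add: haar_circle_def)
  show "prob_space haar_circle"
    unfolding haar_circle_def
    by (intro prob_space.prob_space_distr prob_space_uniform_measure) auto
qed

lemma lborel_transl:
  assumes "X \<in> sets borel"
  shows "emeasure lborel ((\<lambda>t. c + t) -` X) = emeasure lborel (X::real set)"
proof -
  have "emeasure lborel X = emeasure (distr lborel borel ((+) c)) X"
    by (simp add: lborel_distr_plus)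
  also have "\<dots> = emeasure lborel ((+) c -` X)"
    using assms by (subst emeasure_distr) auto
  finally show ?thesis by simp
qed

lemma periodic_shift:
  fixes S :: "real set"
  assumes S: "S \<in> sets borel" and per: "\<And>t. t \<in> S \<longleftrightarrow> t + 2*pi \<in> S"
    and a: "0 \<le> a" "a \<le> 2*pi"
  shows "emeasure lborel ((\<lambda>t. t + a) -` S \<inter> {0..<2*pi}) = emeasure lborel (S \<inter> {0..<2*pi})"
proof -
  have "(\<lambda>t. t + a) -` S \<inter> {0..<2*pi} = (\<lambda>t. a + t) -` (S \<inter> {a..<a+2*pi})"
    by (auto simp: add.commute)
  hence "emeasure lborel ((\<lambda>t. t + a) -` S \<inter> {0..<2*pi}) = emeasure lborel (S \<inter> {a..<a+2*pi})"
    using S lborel_transl[of "S \<inter> {a..<a+2*pi}" a] by simp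
  also have "S \<inter> {a..<a+2*pi} = (S \<inter> {a..<2*pi}) \<union> (S \<inter> {2*pi..<2*pi+a})"
    using a by auto
  also have "emeasure lborel \<dots> = emeasure lborel (S \<inter> {a..<2*pi}) + emeasure lborel (S \<inter> {2*pi..<2*pi+a})"
    using S by (intro plus_emeasure[symmetric]) auto
  also have "S \<inter> {2*pi..<2*pi+a} = (\<lambda>t. (-2*pi) + t) -` (S \<inter> {0..<a})"
  proof -
    have "t \<in> S \<longleftrightarrow> t - 2*pi \<in> S" for t using per[of "t - 2*pi"] by simp
    thus ?thesis by auto
  qed
  also have "emeasure lborel \<dots> = emeasure lborel (S \<inter> {0..<a})"
    using S by (intro lborel_transl) auto
  also have "emeasure lborel (S \<inter> {a..<2*pi}) + emeasure lborel (S \<inter> {0..<a})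
      = emeasure lborel ((S \<inter> {a..<2*pi}) \<union> (S \<inter> {0..<a}))"
    using S by (intro plus_emeasure) auto
  also have "(S \<inter> {a..<2*pi}) \<union> (S \<inter> {0..<a}) = S \<inter> {0..<2*pi}"
    using a by auto
  finally show ?thesis .
qed

lemma haar_rot_inv:
  assumes A: "A \<in> sets circ_borel" and a: "0 \<le> a" "a \<le> 2*pi"
  shows "emeasure haar_circle ((\<lambda>z. cis a * z) -` A \<inter> circle) = emeasure haar_circle A"
proof -
  have rm: "(\<lambda>z. cis a * z) \<in> circ_borel \<rightarrow>\<^sub>M circ_borel"
  proof -
    have "(\<lambda>z. cis a * z) \<in> borel_measurable borel" by measurable
    hence "(\<lambda>z. cis a * z) \<in> restrict_space borel circle \<rightarrow>\<^sub>M borel"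
      using measurable_restrict_space1 by blast
    moreover have "cis a * z \<in> circle" if "z \<in> circle" for z
      using that by (simp add: circle_def norm_mult)
    ultimately show ?thesis unfolding circ_borel_def
      by (intro measurable_restrict_space2) (auto simp: space_restrict_space)
  qed
  have B: "(\<lambda>z. cis a * z) -` A \<inter> circle \<in> sets circ_borel"
    using measurable_sets[OF rm A] by simp
  have S: "cis -` A \<in> sets borel" using measurable_sets[OF cis_meas A] by simp
  have per: "t \<in> cis -` A \<longleftrightarrow> t + 2*pi \<in> cis -` A" for t
    by (simp add: cis.ctr)
  have circ: "cis t \<in> circle" for t by (simp add: circle_def)
  have "cis -` ((\<lambda>z. cis a * z) -` A \<inter> circle) = (\<lambda>t. t + a) -` (cis -` A)"
    using circ by (auto simp: cis_mult add.commute)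
  thus ?thesis
    using haar_emeasure[OF A] haar_emeasure[OF B] periodic_shift[OF S per a] by simp
qed


lemma card_le_real:
  "card {i::nat. i < k \<and> real i \<le> a} = min k (nat (\<lfloor>a\<rfloor> + 1))"
proof -
  have "{i::nat. i < k \<and> real i \<le> a} = {..<min k (nat (\<lfloor>a\<rfloor> + 1))}"
  proof (intro set_eqI iffI)
    fix i assume "i \<in> {i::nat. i < k \<and> real i \<le> a}"
    hence "i < k" "real i \<le> a" by auto
    hence "int i \<le> \<lfloor>a\<rfloor>" by (simp add: le_floor_iff)
    thus "i \<in> {..<min k (nat (\<lfloor>a\<rfloor> + 1))}" using \<open>i < k\<close> by auto
  next
    fix i assume "i \<in> {..<min k (nat (\<lfloor>a\<rfloor> + 1))}"
    hence "i < k" "int i \<le> \<lfloor>a\<rfloor>" by auto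
    hence "real i \<le> a" by (simp add: le_floor_iff)
    thus "i \<in> {i::nat. i < k \<and> real i \<le> a}" using \<open>i < k\<close> by auto
  qed
  thus ?thesis by simp
qed

lemma mod_add_inj:
  "(m + a) mod k = (m + b) mod (k::nat) \<Longrightarrow> a < k \<Longrightarrow> b < k \<Longrightarrow> a = b"
proof (rule ccontr)
  assume h: "(m + a) mod k = (m + b) mod (k::nat)" "a < k" "b < k" "a \<noteq> b"
  hence "int (m + a) mod int k = int (m + b) mod int k" by (metis of_nat_mod)
  hence "int k dvd int (m + a) - int (m + b)" by (simp add: mod_eq_dvd_iff)
  hence "int k dvd int a - int b" by simp
  hence "\<bar>int k\<bar> \<le> \<bar>int a - int b\<bar>" using h by (intro dvd_imp_le_int) auto
  thus False using h by auto
qed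

lemma count_rot:
  fixes k :: nat and t y :: real
  assumes k: "k \<ge> 1" and t: "0 \<le> t" "t < k" and y: "0 \<le> y" "y < k"
  shows "\<bar>real (card {j. j < k \<and> t + j - k * \<lfloor>(t + j) / k\<rfloor> \<le> y}) - y\<bar> \<le> 1"
proof -
  define f where "f = frac t"
  define m where "m = nat \<lfloor>t\<rfloor>"
  have f: "0 \<le> f" "f < 1" by (auto simp: f_def frac_lt_1)
  have tm: "t = real m + f" using t by (simp add: m_def f_def frac_def)
  have key: "t + j - k * \<lfloor>(t + j) / k\<rfloor> = f + real ((m + j) mod k)" for j :: nat
  proof -
    have "\<lfloor>(t + j) / k\<rfloor> = \<lfloor>t + j\<rfloor> div int k"
      using floor_divide_real_eq_div[of "int k" "t + j"] by simp
    also have "\<lfloor>t + j\<rfloor> = int (m + j)" using tm f by (simp add: floor_unique)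
    finally have "\<lfloor>(t + j) / k\<rfloor> = int ((m + j) div k)" by (simp add: zdiv_int)
    hence "t + j - k * \<lfloor>(t + j) / k\<rfloor> = f + (real (m + j) - real k * real ((m + j) div k))"
      using tm by simp
    also have "real (m + j) - real k * real ((m + j) div k) = real ((m + j) mod k)"
      by (metis (no_types) add_diff_cancel_left' div_mult_mod_eq mult.commute of_nat_add of_nat_mult)
    finally show ?thesis .
  qed
  define g where "g = (\<lambda>j. (m + j) mod k)"
  have inj: "inj_on g {..<k}"
  proof (rule inj_onI)
    fix a b assume ab: "a \<in> {..<k}" "b \<in> {..<k}" "g a = g b"
    thus "a = b" using mod_add_inj[of m a k b] by (simp add: g_def)
  qed
  have img: "g ` {..<k} = {..<k}"
  proof (rule endo_inj_surj)
    show "g ` {..<k} \<subseteq> {..<k}" using k by (auto simp: g_def)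
  qed (use inj in auto)
  have seq: "{j. j < k \<and> t + j - k * \<lfloor>(t + j) / k\<rfloor> \<le> y} = {j. j < k \<and> f + real (g j) \<le> y}"
    using key by (simp add: g_def)
  have "card {j. j < k \<and> f + real (g j) \<le> y} = card (g ` {j. j < k \<and> f + real (g j) \<le> y})"
    by (rule card_image[symmetric]) (rule inj_on_subset[OF inj], auto)
  also have "g ` {j. j < k \<and> f + real (g j) \<le> y} = {i. i < k \<and> real i \<le> y - f}"
  proof (intro set_eqI iffI)
    fix i assume i: "i \<in> {i. i < k \<and> real i \<le> y - f}"
    hence "i \<in> g ` {..<k}" using img by simp
    then obtain j where j: "j < k" "i = g j" by auto
    have "j \<in> {j. j < k \<and> f + real (g j) \<le> y}" using i j by simp
    thus "i \<in> g ` {j. j < k \<and> f + real (g j) \<le> y}" using j(2) by blast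
  qed (use img in auto)
  also have "card \<dots> = min k (nat (\<lfloor>y - f\<rfloor> + 1))" by (rule card_le_real)
  also have "\<dots> = nat (\<lfloor>y - f\<rfloor> + 1)"
  proof -
    have "\<lfloor>y - f\<rfloor> < k" using y f by linarith
    thus ?thesis by simp
  qed
  finally have c: "card {j. j < k \<and> t + j - k * \<lfloor>(t + j) / k\<rfloor> \<le> y} = nat (\<lfloor>y - f\<rfloor> + 1)"
    using seq by simp
  have "\<lfloor>y - f\<rfloor> + 1 \<ge> 0" using y f by linarith
  hence "real (nat (\<lfloor>y - f\<rfloor> + 1)) = real_of_int \<lfloor>y - f\<rfloor> + 1" by simp
  hence cc: "real (card {j. j < k \<and> t + j - k * \<lfloor>(t + j) / k\<rfloor> \<le> y}) = real_of_int \<lfloor>y - f\<rfloor> + 1"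
    using c by simp
  have fl: "real_of_int \<lfloor>y - f\<rfloor> \<le> y - f" "y - f < real_of_int \<lfloor>y - f\<rfloor> + 1"
    by linarith+
  show ?thesis unfolding cc abs_le_iff using f fl by linarith
qed


definition phi :: "complex \<Rightarrow> real" where
  "phi z = (if 0 \<le> Im z then arccos (max (-1) (min 1 (Re z)))
            else 2*pi - arccos (max (-1) (min 1 (Re z))))"

lemma arccos_clamp_meas[measurable]:
  "(\<lambda>z::complex. arccos (max (-1) (min 1 (Re z)))) \<in> borel_measurable borel"
  by (intro borel_measurable_continuous_onI continuous_intros) auto

lemma phi_meas[measurable]: "phi \<in> borel_measurable borel"
  unfolding phi_def by measurable

lemma phi_circle:
  assumes z: "z \<in> circle"
  shows "0 \<le> phi z \<and> phi z < 2*pi \<and> cis (phi z) = z"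
proof -
  have n: "(Re z)^2 + (Im z)^2 = 1"
    using z by (simp add: circle_def cmod_def)
  hence "(Re z)^2 \<le> 1" using zero_le_power2[of "Im z"] by linarith
  hence "\<bar>Re z\<bar> \<le> 1" by (simp add: abs_square_le_1)
  hence r: "-1 \<le> Re z" "Re z \<le> 1" by auto
  have cl: "max (-1) (min 1 (Re z)) = Re z" using r by simp
  define a where "a = arccos (Re z)"
  have a: "0 \<le> a" "a \<le> pi" "cos a = Re z" "sin a = sqrt (1 - (Re z)^2)"
    using r by (auto simp: a_def arccos_lbound arccos_ubound cos_arccos sin_arccos)
  have s: "sqrt (1 - (Re z)^2) = \<bar>Im z\<bar>"
  proof -
    have "1 - (Re z)^2 = (Im z)^2" using n by simp
    thus ?thesis by simp
  qed
  show ?thesis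
  proof (cases "0 \<le> Im z")
    case True
    hence "phi z = a" by (simp add: phi_def cl a_def)
    moreover have "cis a = z" using a s True by (simp add: complex_eq_iff)
    moreover have "a < 2*pi" using a(2) pi_gt_zero by linarith
    ultimately show ?thesis using a by simp
  next
    case False
    hence "(Im z)^2 > 0" by simp
    hence "(Re z)^2 < 1" using n by linarith
    hence "\<bar>Re z\<bar> < 1" by (simp add: abs_square_less_1)
    hence "0 < a" "a < pi" using arccos_lt_bounded[of "Re z"] by (auto simp: a_def)
    moreover have "phi z = 2*pi - a" using False by (simp add: phi_def cl a_def)
    moreover have "cis (2*pi - a) = z" using a s False
      by (simp add: complex_eq_iff cos_diff sin_diff)
    ultimately show ?thesis by simp
  qed
qed

lemma phi_cis:
  assumes "0 \<le> t" "t < 2*pi"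
  shows "phi (cis t) = t"
proof (cases "t \<le> pi")
  case True
  have "sin t \<ge> 0" using assms True by (intro sin_ge_zero) auto
  moreover have "max (-1) (min 1 (cos t)) = cos t"
    by (simp add: min_absorb2 max_absorb2)
  ultimately show ?thesis using assms True by (simp add: phi_def arccos_cos)
next
  case False
  have "sin t < 0" using assms False by (intro sin_lt_zero) auto
  moreover have "max (-1) (min 1 (cos t)) = cos t"
    by (simp add: min_absorb2 max_absorb2)
  moreover have "arccos (cos t) = 2*pi - t"
  proof -
    have "cos (2*pi - t) = cos t" by (simp add: cos_diff)
    moreover have "arccos (cos (2*pi - t)) = 2*pi - t" using assms False by (intro arccos_cos) auto
    ultimately show ?thesis by simp
  qed
  ultimately show ?thesis by (simp add: phi_def)
qed

lemma phi_cis_gen: "phi (cis s) = s - 2*pi * \<lfloor>s / (2*pi)\<rfloor>"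
proof -
  define m where "m = \<lfloor>s / (2*pi)\<rfloor>"
  have m1: "real_of_int m \<le> s / (2*pi)" "s / (2*pi) < real_of_int m + 1"
    unfolding m_def by linarith+
  have b: "0 \<le> s - 2*pi*m" "s - 2*pi*m < 2*pi"
    using m1 pi_gt_zero by (auto simp: field_simps)
  have "cis s = cis (s - 2*pi*m) * cis (2*pi*m)" by (subst cis_mult) simp
  also have "cis (2*pi*m) = 1" by (intro cis_multiple_2pi) simp
  finally have "cis s = cis (s - 2*pi*m)" by simp
  thus ?thesis using phi_cis[OF b] by (simp add: m_def)
qed


lemma circ_prob_facts:
  assumes "circ_prob \<mu>"
  shows "prob_space \<mu>" "sets \<mu> = sets circ_borel" "space \<mu> = circle"
proof -
  show s: "sets \<mu> = sets circ_borel" using assms circ_prob_def by auto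
  show "prob_space \<mu>" using assms circ_prob_def by auto
  show "space \<mu> = circle" using sets_eq_imp_space_eq[OF s] by simp
qed

lemma rot_circle: "z \<in> circle \<Longrightarrow> rot k j z \<in> circle"
  by (simp add: rot_def circle_def norm_mult)

lemma Rhat_measure:
  assumes mu: "circ_prob \<mu>" and k: "k \<ge> 1" and A: "A \<in> sets circ_borel"
  shows "measure (Rhat k \<mu>) A = (\<Sum>j<k. measure \<mu> (rot k j -` A \<inter> circle)) / real k"
proof -
  interpret P: prob_space \<mu> using circ_prob_facts[OF mu] by simp
  have "emeasure (Rhat k \<mu>) A = (\<Sum>j<k. ennreal (measure \<mu> (rot k j -` A \<inter> circle))) / ennreal (real k)"
    using Rhat_emeasure[OF mu A] by (simp add: P.emeasure_eq_measure ennreal_of_nat_eq_real_of_nat)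
  also have "\<dots> = ennreal ((\<Sum>j<k. measure \<mu> (rot k j -` A \<inter> circle)) / real k)"
    using k by (subst sum_ennreal) (auto intro!: divide_ennreal sum_nonneg)
  moreover have "0 \<le> (\<Sum>j<k. measure \<mu> (rot k j -` A \<inter> circle)) / real k"
    by (intro divide_nonneg_nonneg sum_nonneg) auto
  ultimately show ?thesis unfolding measure_def by simp
qed

lemma Rhat_prob:
  assumes mu: "circ_prob \<mu>" and k: "k \<ge> 1"
  shows "circ_prob (Rhat k \<mu>)"
proof -
  interpret P: prob_space \<mu> using circ_prob_facts[OF mu] by simp
  have sets: "sets (Rhat k \<mu>) = sets circ_borel"
    unfolding Rhat_def
    using sigma_algebra.sigma_sets_eq[OF sigma_cb] sets.sets_into_space[of _ circ_borel]
    by (subst sets_measure_of) auto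
  have sp: "space (Rhat k \<mu>) = circle" unfolding Rhat_def by (simp add: space_measure_of_conv)
  have cs: "circle \<in> sets circ_borel" using sets.top[of circ_borel] by simp
  have pre: "rot k j -` circle \<inter> circle = circle" for j using rot_circle by auto
  have "emeasure (Rhat k \<mu>) circle = (\<Sum>j<k. emeasure \<mu> circle) / of_nat k"
    using Rhat_emeasure[OF mu cs] pre by simp
  also have "emeasure \<mu> circle = 1" using P.emeasure_space_1 circ_prob_facts[OF mu] by simp
  also have "(\<Sum>j<k. (1::ennreal)) / of_nat k = 1"
    using k by (simp add: ennreal_of_nat_eq_real_of_nat divide_ennreal)
  finally have "emeasure (Rhat k \<mu>) (space (Rhat k \<mu>)) = 1" using sp by simp
  hence "prob_space (Rhat k \<mu>)" by (rule prob_spaceI)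
  thus ?thesis using sets by (simp add: circ_prob_def)
qed

lemma phi_cb[measurable]: "phi \<in> borel_measurable circ_borel"
  unfolding circ_borel_def using phi_meas by (rule measurable_restrict_space1)

lemma Aset: "{z \<in> circle. phi z \<le> x} \<in> sets circ_borel"
proof -
  have "phi -` {..x} \<inter> space circ_borel \<in> sets circ_borel"
    by (rule measurable_sets[OF phi_cb]) simp
  moreover have "phi -` {..x} \<inter> space circ_borel = {z \<in> circle. phi z \<le> x}" by auto
  ultimately show ?thesis by simp
qed

lemma count_point:
  assumes z: "z \<in> circle" and k: "k \<ge> 1" and x: "0 \<le> x" "x < 2*pi"
  shows "\<bar>(\<Sum>j<k. indicator (rot k j -` {z \<in> circle. phi z \<le> x} \<inter> circle) z) - real k * x / (2*pi)\<bar> \<le> (1::real)"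
proof -
  define tt where "tt = phi z * k / (2*pi)"
  define y where "y = x * k / (2*pi)"
  have pz: "0 \<le> phi z" "phi z < 2*pi" "cis (phi z) = z" using phi_circle[OF z] by auto
  have kpos: "real k > 0" using k by simp
  have tt: "0 \<le> tt" "tt < k" using pz kpos by (auto simp: tt_def field_simps)
  have y: "0 \<le> y" "y < k" using x kpos by (auto simp: y_def field_simps)
  have eqv: "phi (rot k j z) \<le> x \<longleftrightarrow> tt + j - k * \<lfloor>(tt + j) / k\<rfloor> \<le> y" for j :: nat
  proof -
    define s where "s = 2 * pi * real j / real k + phi z"
    have "rot k j z = cis s" unfolding rot_def s_def
      by (subst pz(3)[symmetric]) (simp add: cis_mult)
    hence "phi (rot k j z) = s - 2*pi * \<lfloor>s / (2*pi)\<rfloor>" by (simp add: phi_cis_gen)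
    moreover have "s / (2*pi) = (tt + j) / k" using kpos by (simp add: s_def tt_def field_simps)
    moreover have "(s - 2*pi * F \<le> x) \<longleftrightarrow> (tt + j - k * F \<le> y)" for F :: real
    proof -
      have "(s - 2*pi * F \<le> x) \<longleftrightarrow> (s - 2*pi * F) * (k / (2*pi)) \<le> x * (k / (2*pi))"
        using kpos by (intro mult_le_cancel_right_pos[symmetric]) simp
      also have "(s - 2*pi * F) * (k / (2*pi)) = tt + j - k * F"
        using kpos by (simp add: s_def tt_def field_simps)
      also have "x * (k / (2*pi)) = y" by (simp add: y_def)
      finally show ?thesis .
    qed
    ultimately show ?thesis by simp
  qed
  have "(\<Sum>j<k. indicator (rot k j -` {z \<in> circle. phi z \<le> x} \<inter> circle) z)
      = (\<Sum>j<k. if phi (rot k j z) \<le> x then 1 else (0::real))"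
    using z rot_circle[OF z] by (intro sum.cong) (auto simp: indicator_def)
  also have "\<dots> = real (card ({..<k} \<inter> {j. phi (rot k j z) \<le> x}))"
    by (simp add: sum.If_cases)
  also have "{..<k} \<inter> {j. phi (rot k j z) \<le> x} = {j. j < k \<and> tt + j - k * \<lfloor>(tt + j) / k\<rfloor> \<le> y}"
    using eqv by auto
  finally have "(\<Sum>j<k. indicator (rot k j -` {z \<in> circle. phi z \<le> x} \<inter> circle) z)
      = real (card {j. j < k \<and> tt + j - k * \<lfloor>(tt + j) / k\<rfloor> \<le> y})" .
  moreover have "real k * x / (2*pi) = y" by (simp add: y_def)
  ultimately show ?thesis using count_rot[OF k tt y] by simp
qed

lemma Rhat_A:
  assumes mu: "circ_prob \<mu>" and k: "k \<ge> 1" and x: "0 \<le> x" "x < 2*pi"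
  shows "\<bar>measure (Rhat k \<mu>) {z \<in> circle. phi z \<le> x} - x / (2*pi)\<bar> \<le> 1 / real k"
proof -
  interpret P: prob_space \<mu> using circ_prob_facts[OF mu] by simp
  have smu: "sets \<mu> = sets circ_borel" and spmu: "space \<mu> = circle"
    using circ_prob_facts[OF mu] by auto
  define A where "A = {z \<in> circle. phi z \<le> x}"
  have A: "A \<in> sets circ_borel" unfolding A_def by (rule Aset)
  define B where "B j = rot k j -` A \<inter> circle" for j
  have B: "B j \<in> sets \<mu>" for j
    using measurable_sets[OF rot_meas A, of k j] smu by (simp add: B_def)
  define N where "N z = (\<Sum>j<k. indicator (B j) z :: real)" for z
  have intB: "integrable \<mu> (indicator (B j) :: complex \<Rightarrow> real)" for j
    using B by (simp add: integrable_indicator_iff P.emeasure_eq_measure)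
  have "(\<Sum>j<k. measure \<mu> (B j)) = (\<Sum>j<k. integral\<^sup>L \<mu> (indicator (B j)))"
    using B sets.sets_into_space[OF B] by (intro sum.cong refl) (simp add: Int_absorb2)
  also have "\<dots> = integral\<^sup>L \<mu> N"
    unfolding N_def by (rule Bochner_Integration.integral_sum[symmetric]) (rule intB)
  finally have sumN: "(\<Sum>j<k. measure \<mu> (B j)) = integral\<^sup>L \<mu> N" .
  have intN: "integrable \<mu> N" unfolding N_def using intB by auto
  define y where "y = real k * x / (2*pi)"
  have pt: "\<bar>N z - y\<bar> \<le> 1" if "z \<in> space \<mu>" for z
    using count_point[of z k x] that spmu k x by (simp add: N_def B_def A_def y_def)
  have pt2: "N z \<le> y + 1" "y - 1 \<le> N z" if "z \<in> space \<mu>" for z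
    using pt[OF that] by (simp_all add: abs_le_iff)
  have "integral\<^sup>L \<mu> N \<le> integral\<^sup>L \<mu> (\<lambda>_. y + 1)"
    using intN by (intro integral_mono) (auto intro: pt2)
  moreover have "integral\<^sup>L \<mu> (\<lambda>_. y - 1) \<le> integral\<^sup>L \<mu> N"
    using intN by (intro integral_mono) (auto intro: pt2)
  ultimately have "\<bar>integral\<^sup>L \<mu> N - y\<bar> \<le> 1" by (simp add: abs_le_iff P.prob_space)
  moreover have "measure (Rhat k \<mu>) A = integral\<^sup>L \<mu> N / real k"
    using Rhat_measure[OF mu k A] sumN by (simp add: B_def)
  moreover have "x / (2*pi) = y / real k" using k by (simp add: y_def)
  ultimately have "\<bar>measure (Rhat k \<mu>) A - x / (2*pi)\<bar> = \<bar>integral\<^sup>L \<mu> N - y\<bar> / real k"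
    using k by (simp add: diff_divide_distrib[symmetric])
  also have "\<dots> \<le> 1 / real k"
    using \<open>\<bar>integral\<^sup>L \<mu> N - y\<bar> \<le> 1\<close> k by (simp add: divide_right_mono)
  finally show ?thesis by (simp add: A_def)
qed


lemma tv_bdd:
  assumes nu: "circ_prob \<nu>" and rho: "circ_prob \<rho>"
  shows "bdd_above ((\<lambda>P. \<Sum>A\<in>P. \<bar>measure \<nu> A - measure \<rho> A\<bar>) `
           {P. finite P \<and> disjoint P \<and> P \<subseteq> sets circ_borel})"
proof (rule bdd_aboveI2)
  interpret N: prob_space \<nu> using circ_prob_facts[OF nu] by simp
  interpret R: prob_space \<rho> using circ_prob_facts[OF rho] by simp
  fix P assume P: "P \<in> {P. finite P \<and> disjoint P \<and> P \<subseteq> sets circ_borel}"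
  hence fin: "finite P" and dis: "disjoint P" and sub: "P \<subseteq> sets circ_borel" by auto
  have sn: "sets \<nu> = sets circ_borel" "sets \<rho> = sets circ_borel"
    using circ_prob_facts[OF nu] circ_prob_facts[OF rho] by auto
  have "(\<Sum>A\<in>P. \<bar>measure \<nu> A - measure \<rho> A\<bar>) \<le> (\<Sum>A\<in>P. measure \<nu> A + measure \<rho> A)"
    by (intro sum_mono) (simp add: abs_le_iff)
  also have "\<dots> = (\<Sum>A\<in>P. measure \<nu> A) + (\<Sum>A\<in>P. measure \<rho> A)" by (simp add: sum.distrib)
  also have "(\<Sum>A\<in>P. measure \<nu> A) = measure \<nu> (\<Union>P)"
    using fin dis sub sn by (intro measure_Union'[symmetric]) (auto simp: N.fmeasurable_eq_sets)
  also have "(\<Sum>A\<in>P. measure \<rho> A) = measure \<rho> (\<Union>P)"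
    using fin dis sub sn by (intro measure_Union'[symmetric]) (auto simp: R.fmeasurable_eq_sets)
  also have "measure \<nu> (\<Union>P) + measure \<rho> (\<Union>P) \<le> 2"
    using N.prob_le_1 R.prob_le_1 by (smt (verit))
  finally show "(\<Sum>A\<in>P. \<bar>measure \<nu> A - measure \<rho> A\<bar>) \<le> 2" .
qed

lemma tv_ge:
  assumes nu: "circ_prob \<nu>" and rho: "circ_prob \<rho>" and A: "A \<in> sets circ_borel"
  shows "\<bar>measure \<nu> A - measure \<rho> A\<bar> \<le> tv_dist \<nu> \<rho>"
proof -
  have "{A} \<in> {P. finite P \<and> disjoint P \<and> P \<subseteq> sets circ_borel}" using A by auto
  from cSUP_upper[OF this tv_bdd[OF nu rho]] show ?thesis by (simp add: tv_dist_def)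
qed

lemma tv_self:
  shows "tv_dist \<nu> \<nu> = 0"
proof -
  have "{} \<in> {P. finite P \<and> disjoint P \<and> P \<subseteq> sets circ_borel}" by auto
  hence ne: "{P. finite P \<and> disjoint P \<and> P \<subseteq> sets circ_borel} \<noteq> {}" by blast
  have e: "(\<Sum>A\<in>P. \<bar>measure \<nu> A - measure \<nu> A\<bar>) = 0" for P by simp
  show ?thesis unfolding tv_dist_def e using ne by (rule cSUP_const)
qed

lemma conv_bound:
  assumes rho: "\<rho> \<in> conv_meas {Rhat k \<mu> | k \<mu>. k \<ge> n \<and> circ_prob \<mu>}" and n: "n \<ge> 1"
    and x: "0 \<le> x" "x < 2*pi"
  shows "\<bar>measure \<rho> {z \<in> circle. phi z \<le> x} - x / (2*pi)\<bar> \<le> 1 / real n"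
proof -
  define S where "S = {Rhat k \<mu> | k \<mu>. k \<ge> n \<and> circ_prob \<mu>}"
  have "\<exists>(I::nat set) c g. finite I \<and> (\<forall>i\<in>I. c i \<ge> (0::real) \<and> g i \<in> S) \<and> (\<Sum>i\<in>I. c i) = 1 \<and>
        (\<forall>A\<in>sets circ_borel. measure \<rho> A = (\<Sum>i\<in>I. c i * measure (g i) A))"
    using rho unfolding conv_meas_def S_def mem_Collect_eq by (rule conjunct2)
  then obtain I c g where H: "finite (I::nat set) \<and> (\<forall>i\<in>I. c i \<ge> (0::real) \<and> g i \<in> S) \<and> (\<Sum>i\<in>I. c i) = 1 \<and>
        (\<forall>A\<in>sets circ_borel. measure \<rho> A = (\<Sum>i\<in>I. c i * measure (g i) A))"
    by blast
  have I1: "finite (I::nat set)" and I2: "\<forall>i\<in>I. c i \<ge> (0::real) \<and> g i \<in> S"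
    and I3: "(\<Sum>i\<in>I. c i) = 1" and I4: "\<forall>A\<in>sets circ_borel. measure \<rho> A = (\<Sum>i\<in>I. c i * measure (g i) A)"
    using H by blast+
  define A where "A = {z \<in> circle. phi z \<le> x}"
  have A: "A \<in> sets circ_borel" unfolding A_def by (rule Aset)
  define q where "q = x / (2*pi)"
  have gi: "\<bar>measure (g i) A - q\<bar> \<le> 1 / real n" if "i \<in> I" for i
  proof -
    have "g i \<in> S" using I2 that by blast
    then obtain k \<mu> where k: "g i = Rhat k \<mu>" "k \<ge> n" "circ_prob \<mu>" unfolding S_def by auto
    have "1 / real k \<le> 1 / real n" using n k(2) by (simp add: frac_le)
    moreover have "\<bar>measure (Rhat k \<mu>) A - q\<bar> \<le> 1 / real k"
      unfolding A_def q_def using Rhat_A[OF k(3) _ x] n k(2) by simp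
    ultimately show ?thesis using k(1) by simp
  qed
  have e1: "(\<Sum>i\<in>I. c i * (measure (g i) A - q)) = (\<Sum>i\<in>I. c i * measure (g i) A) - (\<Sum>i\<in>I. c i) * q"
    by (simp add: right_diff_distrib sum_subtractf sum_distrib_right)
  have e2: "measure \<rho> A - q = (\<Sum>i\<in>I. c i * (measure (g i) A - q))"
    unfolding e1 I3 using I4 A by simp
  have "\<bar>\<Sum>i\<in>I. c i * (measure (g i) A - q)\<bar> \<le> (\<Sum>i\<in>I. \<bar>c i * (measure (g i) A - q)\<bar>)"
    by (rule sum_abs)
  also have "\<dots> \<le> (\<Sum>i\<in>I. c i * (1 / real n))"
  proof (rule sum_mono)
    fix i assume i: "i \<in> I"
    have c0: "c i \<ge> 0" using I2 i by blast
    have "\<bar>c i * (measure (g i) A - q)\<bar> = c i * \<bar>measure (g i) A - q\<bar>" using c0 by (simp add: abs_mult)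
    also have "\<dots> \<le> c i * (1 / real n)" using c0 gi[OF i] by (rule mult_left_mono[rotated])
    finally show "\<bar>c i * (measure (g i) A - q)\<bar> \<le> c i * (1 / real n)" .
  qed
  also have "(\<Sum>i\<in>I. c i * (1 / real n)) = (\<Sum>i\<in>I. c i) * (1 / real n)"
    by (rule sum_distrib_right[symmetric])
  also have "\<dots> = 1 / real n" using I3 by simp
  finally show ?thesis using e2 by (simp add: A_def q_def)
qed

lemma tri3: "\<bar>a - c\<bar> \<le> \<bar>a - b\<bar> + \<bar>b - (c::real)\<bar>"
  by arith

lemma closure_val:
  assumes nu: "\<nu> \<in> (\<Inter>n\<in>{1::nat..}. tv_closure (conv_meas {Rhat k \<mu> | k \<mu>. k \<ge> n \<and> circ_prob \<mu>}))"
    and x: "0 \<le> x" "x < 2*pi"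
  shows "measure \<nu> {z \<in> circle. phi z \<le> x} = x / (2*pi)"
proof (rule ccontr)
  define d where "d = \<bar>measure \<nu> {z \<in> circle. phi z \<le> x} - x / (2*pi)\<bar>"
  assume "measure \<nu> {z \<in> circle. phi z \<le> x} \<noteq> x / (2*pi)"
  hence d: "d > 0" by (simp add: d_def)
  have d2: "d / 2 > 0" using d by simp
  obtain m :: nat where m: "inverse (real (Suc m)) < d / 2" using reals_Archimedean[OF d2] by blast
  define n where "n = Suc m"
  have n1: "n \<in> {1..}" by (simp add: n_def)
  have "\<nu> \<in> tv_closure (conv_meas {Rhat k \<mu> | k \<mu>. k \<ge> n \<and> circ_prob \<mu>})"
    by (rule INT_D[OF nu n1])
  hence nuc: "circ_prob \<nu>" and ex: "\<forall>\<epsilon>>0. \<exists>\<rho>\<in>conv_meas {Rhat k \<mu> | k \<mu>. k \<ge> n \<and> circ_prob \<mu>}. tv_dist \<nu> \<rho> < \<epsilon>"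
    unfolding tv_closure_def by auto
  from d2 obtain \<rho> where rho: "\<rho> \<in> conv_meas {Rhat k \<mu> | k \<mu>. k \<ge> n \<and> circ_prob \<mu>}"
    and tv: "tv_dist \<nu> \<rho> < d / 2"
    using ex by blast
  have rc: "circ_prob \<rho>" using rho unfolding conv_meas_def mem_Collect_eq by (rule conjunct1)
  have "\<bar>measure \<nu> {z \<in> circle. phi z \<le> x} - measure \<rho> {z \<in> circle. phi z \<le> x}\<bar> < d / 2"
    using tv_ge[OF nuc rc Aset[of x]] tv by linarith
  moreover have "\<bar>measure \<rho> {z \<in> circle. phi z \<le> x} - x / (2*pi)\<bar> \<le> 1 / real n"
    using conv_bound[OF rho _ x] by (simp add: n_def)
  moreover have "1 / real n < d / 2" using m by (simp add: n_def inverse_eq_divide)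
  moreover have "d \<le> \<bar>measure \<nu> {z \<in> circle. phi z \<le> x} - measure \<rho> {z \<in> circle. phi z \<le> x}\<bar>
      + \<bar>measure \<rho> {z \<in> circle. phi z \<le> x} - x / (2*pi)\<bar>"
    unfolding d_def by (rule tri3)
  ultimately show False by linarith
qed


lemma haar_A:
  assumes x: "0 \<le> x" "x < 2*pi"
  shows "measure haar_circle {z \<in> circle. phi z \<le> x} = x / (2*pi)"
proof -
  have c: "cis t \<in> circle" for t by (simp add: circle_def)
  have "cis -` {z \<in> circle. phi z \<le> x} \<inter> {0..<2*pi} = {0..x}"
    using x c phi_cis by auto
  hence "emeasure haar_circle {z \<in> circle. phi z \<le> x} = ennreal x / ennreal (2*pi)"
    using haar_emeasure[OF Aset[of x]] x by simp
  also have "\<dots> = ennreal (x / (2*pi))" using x by (intro divide_ennreal) auto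
  finally show ?thesis unfolding measure_def using x by simp
qed

lemma phi_nu[measurable]:
  assumes "circ_prob \<nu>" shows "phi \<in> borel_measurable \<nu>"
proof -
  have "sets \<nu> = sets circ_borel" using circ_prob_facts[OF assms] by simp
  hence e: "borel_measurable \<nu> = borel_measurable circ_borel" by (rule measurable_cong_sets) simp
  show ?thesis unfolding e by (rule phi_cb)
qed

lemma cdf_form:
  assumes nu: "circ_prob \<nu>"
    and h: "\<And>x. 0 \<le> x \<Longrightarrow> x < 2*pi \<Longrightarrow> measure \<nu> {z \<in> circle. phi z \<le> x} = x / (2*pi)"
  shows "cdf (distr \<nu> borel phi) x = (if x < 0 then 0 else if x < 2*pi then x / (2*pi) else 1)"
proof -
  interpret N: prob_space \<nu> using circ_prob_facts[OF nu] by simp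
  have sp: "space \<nu> = circle" using circ_prob_facts[OF nu] by simp
  have "cdf (distr \<nu> borel phi) x = measure \<nu> (phi -` {..x} \<inter> space \<nu>)"
    unfolding cdf_def using phi_nu[OF nu] by (subst measure_distr) auto
  also have "phi -` {..x} \<inter> space \<nu> = {z \<in> circle. phi z \<le> x}" using sp by auto
  finally have e: "cdf (distr \<nu> borel phi) x = measure \<nu> {z \<in> circle. phi z \<le> x}" .
  show ?thesis
  proof (cases "x < 0")
    case True
    have emp: "{z \<in> circle. phi z \<le> x} = {}" using True phi_circle by force
    show ?thesis using True by (simp add: e emp)
  next
    case False
    show ?thesis
    proof (cases "x < 2*pi")
      case True
      thus ?thesis using e False h[of x] by simp
    next
      case F2: False
      have sp2: "{z \<in> circle. phi z \<le> x} = space \<nu>" using F2 phi_circle sp by force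
      show ?thesis using False F2 by (simp add: e sp2 N.prob_space)
    qed
  qed
qed

lemma real_dist_phi:
  assumes nu: "circ_prob \<nu>" shows "real_distribution (distr \<nu> borel phi)"
proof -
  interpret N: prob_space \<nu> using circ_prob_facts[OF nu] by simp
  have "prob_space (distr \<nu> borel phi)" using phi_nu[OF nu] by (rule N.prob_space_distr)
  thus ?thesis by (simp add: real_distribution_def real_distribution_axioms_def)
qed

lemma recover:
  assumes nu: "circ_prob \<nu>" shows "distr (distr \<nu> borel phi) circ_borel cis = \<nu>"
proof -
  have s: "sets \<nu> = sets circ_borel" and sp: "space \<nu> = circle" using circ_prob_facts[OF nu] by auto
  have "distr (distr \<nu> borel phi) circ_borel cis = distr \<nu> circ_borel (cis \<circ> phi)"
    using phi_nu[OF nu] cis_meas by (intro distr_distr) auto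
  also have "\<dots> = distr \<nu> circ_borel (\<lambda>x. x)"
    using sp phi_circle by (intro distr_cong) auto
  also have "\<dots> = \<nu>" using s by (intro distr_id2) simp
  finally show ?thesis .
qed

lemma charact:
  assumes nu: "circ_prob \<nu>"
    and h: "\<And>x. 0 \<le> x \<Longrightarrow> x < 2*pi \<Longrightarrow> measure \<nu> {z \<in> circle. phi z \<le> x} = x / (2*pi)"
  shows "\<nu> = haar_circle"
proof -
  have "distr \<nu> borel phi = distr haar_circle borel phi"
  proof (rule cdf_unique[OF real_dist_phi[OF nu] real_dist_phi[OF haar_prob]])
    show "cdf (distr \<nu> borel phi) = cdf (distr haar_circle borel phi)"
      using cdf_form[OF nu h] cdf_form[OF haar_prob haar_A] by (simp add: fun_eq_iff)
  qed
  thus ?thesis using recover[OF nu] recover[OF haar_prob] by metis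
qed

lemma Rhat_haar:
  assumes n: "n \<ge> 1" and A: "A \<in> sets circ_borel"
  shows "measure (Rhat n haar_circle) A = measure haar_circle A"
proof -
  have "measure haar_circle (rot n j -` A \<inter> circle) = measure haar_circle A" if "j < n" for j
  proof -
    have a: "0 \<le> 2 * pi * real j / real n" "2 * pi * real j / real n \<le> 2 * pi"
      using that n by (auto simp: field_simps)
    have "rot n j = (\<lambda>z. cis (2 * pi * real j / real n) * z)" by (simp add: rot_def fun_eq_iff)
    thus ?thesis using haar_rot_inv[OF A a] by (simp add: measure_def)
  qed
  hence "measure (Rhat n haar_circle) A = (\<Sum>j<n. measure haar_circle A) / real n"
    using Rhat_measure[OF haar_prob n A] by simp
  thus ?thesis using n by simp
qed

theorem lemma8p1:
  shows "(\<Inter>n\<in>{1::nat..}. tv_closure (conv_meas {Rhat k \<mu> | k \<mu>. k \<ge> n \<and> circ_prob \<mu>}))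
           = {haar_circle}"
proof (intro equalityI subsetI)
  fix \<nu> assume nu: "\<nu> \<in> (\<Inter>n\<in>{1::nat..}. tv_closure (conv_meas {Rhat k \<mu> | k \<mu>. k \<ge> n \<and> circ_prob \<mu>}))"
  have "\<nu> \<in> tv_closure (conv_meas {Rhat k \<mu> | k \<mu>. k \<ge> 1 \<and> circ_prob \<mu>})"
    by (rule INT_D[OF nu]) simp
  hence nuc: "circ_prob \<nu>" unfolding tv_closure_def by simp
  show "\<nu> \<in> {haar_circle}" using charact[OF nuc closure_val[OF nu]] by simp
next
  fix \<nu> assume "\<nu> \<in> {haar_circle}"
  hence nu: "\<nu> = haar_circle" by simp
  show "\<nu> \<in> (\<Inter>n\<in>{1::nat..}. tv_closure (conv_meas {Rhat k \<mu> | k \<mu>. k \<ge> n \<and> circ_prob \<mu>}))"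
  proof
    fix n :: nat assume "n \<in> {1..}"
    hence n: "n \<ge> 1" by simp
    have hc: "haar_circle \<in> conv_meas {Rhat k \<mu> | k \<mu>. k \<ge> n \<and> circ_prob \<mu>}"
      unfolding conv_meas_def
    proof (intro CollectI conjI haar_prob exI[of _ "{0::nat}"] exI[of _ "\<lambda>_. 1::real"]
        exI[of _ "\<lambda>_. Rhat n haar_circle"])
      show "finite {0::nat}" by simp
      show "\<forall>i\<in>{0::nat}. 0 \<le> (1::real) \<and> Rhat n haar_circle \<in> {Rhat k \<mu> | k \<mu>. k \<ge> n \<and> circ_prob \<mu>}"
      proof
        fix i :: nat assume "i \<in> {0}"
        have "Rhat n haar_circle \<in> {Rhat k \<mu> | k \<mu>. k \<ge> n \<and> circ_prob \<mu>}"
          using haar_prob by (intro CollectI exI[of _ n] exI[of _ haar_circle]) simp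
        thus "0 \<le> (1::real) \<and> Rhat n haar_circle \<in> {Rhat k \<mu> | k \<mu>. k \<ge> n \<and> circ_prob \<mu>}" by simp
      qed
      show "(\<Sum>i\<in>{0::nat}. (1::real)) = 1" by simp
      show "\<forall>A\<in>sets circ_borel. measure haar_circle A = (\<Sum>i\<in>{0::nat}. 1 * measure (Rhat n haar_circle) A)"
        using Rhat_haar[OF n] by simp
    qed
    show "\<nu> \<in> tv_closure (conv_meas {Rhat k \<mu> | k \<mu>. k \<ge> n \<and> circ_prob \<mu>})"
      unfolding tv_closure_def nu
    proof (intro CollectI conjI haar_prob allI impI)
      fix \<epsilon> :: real assume "\<epsilon> > 0"
      thus "\<exists>\<rho>\<in>conv_meas {Rhat k \<mu> | k \<mu>. k \<ge> n \<and> circ_prob \<mu>}. tv_dist haar_circle \<rho> < \<epsilon>"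
        using hc tv_self[of haar_circle] by (intro bexI[of _ haar_circle]) simp_all
    qed
  qed
qed

end
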